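(* Let $G$ be a cyclic group of order $3$ and $\mathbb{Z}_{(2)} = \{ m/n : m,n\in\mathbb{Z},\ n \text{ odd}\}$. Then the group ring $\mathbb{Z}_{(2)}G$ is strongly clean.
   Context: All rings are associative with identity. An element $x$ of a ring $R$ is strongly clean if $x = e+u$ with $e^2=e$, $u$ a unit, and $eu=ue$; $R$ is strongly clean if every element is. *)

theory Defs
  imports Complex_Main "HOL-Algebra.Ring"
begin

definition strongly_clean_elem :: "('a, 'b) ring_scheme \<Rightarrow> 'a \<Rightarrow> bool" where
  "strongly_clean_elem R x \<longleftrightarrow>
     (\<exists>e\<in>carrier R. \<exists>u\<in>Units R.
        e \<otimes>\<^bsub>R\<^esub> e = e \<and> e \<otimes>\<^bsub>R\<^esub> u = u \<otimes>\<^bsub>R\<^esub> e \<and> x = e \<oplus>\<^bsub>R\<^esub> u)"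

definition strongly_clean :: "('a, 'b) ring_scheme \<Rightarrow> bool" where
  "strongly_clean R \<longleftrightarrow> (\<forall>x\<in>carrier R. strongly_clean_elem R x)"

definition Z2loc :: "rat set" where
  "Z2loc = {of_int m / of_int n | m n. odd n}"

text \<open>The group ring Z_(2) C_3, where C_3 = {1, g, g^2}. An element (a,b,c)
  stands for a + b g + c g^2; multiplication is the group-ring convolution.\<close>
definition C3_mult :: "rat \<times> rat \<times> rat \<Rightarrow> rat \<times> rat \<times> rat \<Rightarrow> rat \<times> rat \<times> rat" where
  "C3_mult x y = (case x of (a0, a1, a2) \<Rightarrow> case y of (b0, b1, b2) \<Rightarrow>
      (a0*b0 + a1*b2 + a2*b1, a0*b1 + a1*b0 + a2*b2, a0*b2 + a1*b1 + a2*b0))"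

definition C3_add :: "rat \<times> rat \<times> rat \<Rightarrow> rat \<times> rat \<times> rat \<Rightarrow> rat \<times> rat \<times> rat" where
  "C3_add x y = (case x of (a0, a1, a2) \<Rightarrow> case y of (b0, b1, b2) \<Rightarrow>
      (a0 + b0, a1 + b1, a2 + b2))"

definition Z2_C3 :: "(rat \<times> rat \<times> rat) ring" where
  "Z2_C3 = \<lparr> carrier = {(a, b, c). a \<in> Z2loc \<and> b \<in> Z2loc \<and> c \<in> Z2loc},
             monoid.mult = C3_mult, one = (1, 0, 0),
             zero = (0, 0, 0), add = C3_add \<rparr>"

end

theory Submission
  imports Defs
begin

lemma Z2loc_I: "odd (n::int) \<Longrightarrow> (of_int a / of_int n :: rat) \<in> Z2loc"
  unfolding Z2loc_def by blast

lemma odd_nz: "odd (n::int) \<Longrightarrow> (of_int n :: rat) \<noteq> 0"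
  by auto

lemma N_parity:
  "odd ((a::int)^2 + b^2 + c^2 - a*b - b*c - c*a) \<longleftrightarrow> \<not> (even a = even b \<and> even b = even c)"
  by (cases "even a"; cases "even b"; cases "even c") (auto simp: even_add even_diff even_mult_iff)

lemma unit_lemma:
  fixes a b c m :: int
  assumes m: "odd m" and s: "odd (a+b+c)" and N: "odd (a^2 + b^2 + c^2 - a*b - b*c - c*a)"
  shows "(of_int a / of_int m, of_int b / of_int m, of_int c / of_int m) \<in> Units Z2_C3"
proof -
  define D where "D = (a+b+c) * (a^2 + b^2 + c^2 - a*b - b*c - c*a)"
  have D: "odd D" using s N unfolding D_def by simp
  have Dnz: "(of_int D::rat) \<noteq> 0" using D by auto
  have mnz: "(of_int m::rat) \<noteq> 0" using m by auto
  define y where "y = (of_int (m*(a^2-b*c)) / of_int D :: rat,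
                       of_int (m*(c^2-a*b)) / of_int D :: rat,
                       of_int (m*(b^2-a*c)) / of_int D :: rat)"
  have yc: "y \<in> carrier Z2_C3" unfolding y_def Z2_C3_def using Z2loc_I[OF D, of "m*(a^2-b*c)"] Z2loc_I[OF D, of "m*(c^2-a*b)"]
      Z2loc_I[OF D, of "m*(b^2-a*c)"] by simp
  have xc: "(of_int a / of_int m, of_int b / of_int m, of_int c / of_int m) \<in> carrier Z2_C3"
    unfolding Z2_C3_def using Z2loc_I[OF m] by simp
  have Dq: "(of_int D::rat) = (of_int a + of_int b + of_int c) *
     ((of_int a)^2 + (of_int b)^2 + (of_int c)^2 - of_int a * of_int b - of_int b * of_int c - of_int c * of_int a)"
    unfolding D_def by simp
  have e1: "C3_mult (of_int a / of_int m, of_int b / of_int m, of_int c / of_int m) y = (1,0,0)"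
    unfolding C3_mult_def y_def using Dnz mnz
    by (simp add: field_simps, simp only: Dq, simp add: algebra_simps power2_eq_square)
  have e2: "C3_mult y (of_int a / of_int m, of_int b / of_int m, of_int c / of_int m) = (1,0,0)"
    unfolding C3_mult_def y_def using Dnz mnz
    by (simp add: field_simps, simp only: Dq, simp add: algebra_simps power2_eq_square)
  show ?thesis unfolding Units_def using xc yc e1 e2 by (auto simp: Z2_C3_def)
qed

lemma comm: "C3_mult x y = C3_mult y x"
  unfolding C3_mult_def by (auto split: prod.splits simp: algebra_simps)

lemma third: "(1/3 :: rat) \<in> Z2loc" "(-1/3 :: rat) \<in> Z2loc" "(2/3 :: rat) \<in> Z2loc" "- (1/3 :: rat) \<in> Z2loc"
    "(1::rat) \<in> Z2loc" "(0::rat) \<in> Z2loc"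
  using Z2loc_I[of 3 1] Z2loc_I[of 3 "-1"] Z2loc_I[of 3 2] Z2loc_I[of 3 "-1"] Z2loc_I[of 1 1] Z2loc_I[of 1 0] by auto

lemma sc_intro:
  assumes "e \<in> carrier Z2_C3" "u \<in> Units Z2_C3" "C3_mult e e = e" "x = C3_add e u"
  shows "strongly_clean_elem Z2_C3 x"
  unfolding strongly_clean_elem_def using assms comm by (auto simp: Z2_C3_def)

theorem corollary1p14:
  shows "strongly_clean Z2_C3"
  unfolding strongly_clean_def
proof
  fix x assume "x \<in> carrier Z2_C3"
  then obtain a1 n1 a2 n2 a3 n3 where x: "x = (of_int a1 / of_int n1, of_int a2 / of_int n2, of_int a3 / of_int n3)"
    and o: "odd n1" "odd n2" "odd n3"
    unfolding Z2_C3_def Z2loc_def by auto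
  define n where "n = n1*n2*n3"
  define a where "a = a1*n2*n3"
  define b where "b = a2*n1*n3"
  define c where "c = a3*n1*n2"
  have n: "odd n" using o unfolding n_def by simp
  have nz: "(of_int n::rat) \<noteq> 0" using n by auto
  have x': "x = (of_int a / of_int n, of_int b / of_int n, of_int c / of_int n)"
    unfolding x a_def b_def c_def n_def using o by (auto simp: field_simps)
  have n3: "odd (3*n)" using n by simp
  show "strongly_clean_elem Z2_C3 x"
  proof (cases "odd (a+b+c)")
    case s: True
    show ?thesis
    proof (cases "odd (a^2 + b^2 + c^2 - a*b - b*c - c*a)")
      case True
      show ?thesis
        by (rule sc_intro[where e="(0,0,0)"])
           (use unit_lemma[OF n s True] x' in \<open>auto simp: Z2_C3_def third C3_mult_def C3_add_def\<close>)
    next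
      case False
      hence par: "even a = even b \<and> even b = even c" using N_parity by blast
      have u: "(of_int (3*a-2*n) / of_int (3*n), of_int (3*b+n) / of_int (3*n), of_int (3*c+n) / of_int (3*n)) \<in> Units Z2_C3"
        apply (rule unit_lemma[OF n3])
        subgoal using s par n by (cases "even a"; cases "even b"; cases "even c"; simp add: even_add even_diff)
        subgoal apply (subst N_parity) using s par n by (cases "even a"; cases "even b"; cases "even c"; simp add: even_add even_diff)
        done
      show ?thesis
        by (rule sc_intro[OF _ u, where e="(2/3,-1/3,-1/3)"])
           (use x' nz in \<open>auto simp: Z2_C3_def third C3_mult_def C3_add_def field_simps\<close>)
    qed
  next
    case s: False
    show ?thesis
    proof (cases "odd (a^2 + b^2 + c^2 - a*b - b*c - c*a)")
      case True
      hence par: "\<not> (even a = even b \<and> even b = even c)" using N_parity by blast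
      have u: "(of_int (3*a-n) / of_int (3*n), of_int (3*b-n) / of_int (3*n), of_int (3*c-n) / of_int (3*n)) \<in> Units Z2_C3"
        apply (rule unit_lemma[OF n3])
        subgoal using s par n by (cases "even a"; cases "even b"; cases "even c"; simp add: even_add even_diff)
        subgoal apply (subst N_parity) using s par n by (cases "even a"; cases "even b"; cases "even c"; simp add: even_add even_diff)
        done
      show ?thesis
        by (rule sc_intro[OF _ u, where e="(1/3,1/3,1/3)"])
           (use x' nz in \<open>auto simp: Z2_C3_def third C3_mult_def C3_add_def field_simps\<close>)
    next
      case False
      hence par: "even a = even b \<and> even b = even c" using N_parity by blast
      have u: "(of_int (a-n) / of_int n, of_int b / of_int n, of_int c / of_int n) \<in> Units Z2_C3"
        apply (rule unit_lemma[OF n])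
        subgoal using s par n by (cases "even a"; cases "even b"; cases "even c"; simp add: even_add even_diff)
        subgoal apply (subst N_parity) using s par n by (cases "even a"; cases "even b"; cases "even c"; simp add: even_add even_diff)
        done
      show ?thesis
        by (rule sc_intro[OF _ u, where e="(1,0,0)"])
           (use x' nz in \<open>auto simp: Z2_C3_def third C3_mult_def C3_add_def field_simps\<close>)
    qed
  qed
qed

end
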